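(* Let $(G,\sigma)$ be a colored planar, color-connected graph with vertices $s,t$ connected in $G$, and let $C\subseteq[m]$ be a set of colors. Then $C$ is a color-hitting set if and only if there exists an $s$-$t$ path $\pi$ in $G$ with $\sigma(\pi)\subseteq C$.
   Context: $G=(V,E)$ is a finite undirected graph and $\sigma:V\to 2^{[m]}$; for a path $\pi$, $\sigma(\pi)=\bigcup_{v\in\pi}\sigma(v)$. Color-connected means for each color $c$ the vertices whose color set contains $c$ induce a connected subgraph. For $C\subseteq[m]$, $V(C)=\{v:\sigma(v)\cap C\ne\emptyset\}$. $S\subseteq[m]$ is an $s$-$t$ color separator if $s$ and $t$ are disconnected in $G-V(S)$ (i.e. no $s$-$t$ path avoids $V(S)$). $C$ is a color-hitting set if $C\cap S\neq\emptyset$ for every $s$-$t$ color separator $S$. *)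

theory Defs
  imports "Graph_Theory.Graph_Theory"
begin

text \<open>Undirected finite graphs are represented as symmetric, loop-free pair digraphs
  (locale pair_graph of the AFP entry Graph_Theory).\<close>

definition colors_of_path :: "('a \<Rightarrow> nat set) \<Rightarrow> 'a list \<Rightarrow> nat set" where
  "colors_of_path \<sigma> p = (\<Union>v\<in>set p. \<sigma> v)"

definition color_class :: "'a pair_pre_digraph \<Rightarrow> ('a \<Rightarrow> nat set) \<Rightarrow> nat \<Rightarrow> 'a set" where
  "color_class G \<sigma> c = {v \<in> pverts G. c \<in> \<sigma> v}"

text \<open>Each color class induces a connected subgraph (the empty class counts as connected).\<close>
definition color_connected :: "'a pair_pre_digraph \<Rightarrow> ('a \<Rightarrow> nat set) \<Rightarrow> nat \<Rightarrow> bool" where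
  "color_connected G \<sigma> m \<longleftrightarrow>
     (\<forall>c\<in>{1..m}. \<forall>u\<in>color_class G \<sigma> c. \<forall>w\<in>color_class G \<sigma> c.
        u \<rightarrow>\<^sup>*\<^bsub>with_proj G \<restriction> color_class G \<sigma> c\<^esub> w)"

definition verts_of_colors :: "'a pair_pre_digraph \<Rightarrow> ('a \<Rightarrow> nat set) \<Rightarrow> nat set \<Rightarrow> 'a set" where
  "verts_of_colors G \<sigma> C = {v \<in> pverts G. \<sigma> v \<inter> C \<noteq> {}}"

definition color_separator ::
  "'a pair_pre_digraph \<Rightarrow> ('a \<Rightarrow> nat set) \<Rightarrow> nat \<Rightarrow> 'a \<Rightarrow> 'a \<Rightarrow> nat set \<Rightarrow> bool" where
  "color_separator G \<sigma> m s t S \<longleftrightarrow> S \<subseteq> {1..m} \<and>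
     \<not> (s \<rightarrow>\<^sup>*\<^bsub>with_proj G \<restriction> (pverts G - verts_of_colors G \<sigma> S)\<^esub> t)"

definition color_hitting_set ::
  "'a pair_pre_digraph \<Rightarrow> ('a \<Rightarrow> nat set) \<Rightarrow> nat \<Rightarrow> 'a \<Rightarrow> 'a \<Rightarrow> nat set \<Rightarrow> bool" where
  "color_hitting_set G \<sigma> m s t C \<longleftrightarrow>
     (\<forall>S. color_separator G \<sigma> m s t S \<longrightarrow> C \<inter> S \<noteq> {})"

end

theory Submission
  imports Defs
begin

lemma arcs_ends_induce_proj:
  "arcs_ends (with_proj G \<restriction> X) = {e \<in> parcs G. fst e \<in> X \<and> snd e \<in> X}"
  by (auto simp: arcs_ends_conv)

lemma reach_induce_vwalk:
  assumes "X \<subseteq> pverts G"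
    and "u \<rightarrow>\<^sup>*\<^bsub>with_proj G \<restriction> X\<^esub> v"
  shows "\<exists>p. vwalk p (with_proj G) \<and> hd p = u \<and> last p = v \<and> set p \<subseteq> X"
proof -
  have "(u, v) \<in> rtrancl_on X (arcs_ends (with_proj G \<restriction> X))"
    using assms(2) unfolding reachable_def by simp
  then show ?thesis
  proof (induct rule: converse_rtrancl_on_induct)
    case base
    then show ?case using assms(1)
      by (intro exI[of _ "[v]"]) (auto simp: vwalk_def)
  next
    case (step x y)
    then obtain p where p: "vwalk p (with_proj G)" "hd p = y" "last p = v" "set p \<subseteq> X"
      by blast
    have xy: "(x, y) \<in> parcs G" using step(1) by (simp add: arcs_ends_induce_proj)
    have "vwalk (x # p) (with_proj G)"
      using p xy step(3) assms(1) by (intro vwalk_consI) auto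
    then show ?case using p step(3)
      by (intro exI[of _ "x # p"]) (auto simp: vwalk_def)
  qed
qed

lemma vwalk_reach_induce:
  assumes "vwalk p (with_proj G)" and "set p \<subseteq> X"
  shows "hd p \<rightarrow>\<^sup>*\<^bsub>with_proj G \<restriction> X\<^esub> last p"
  using assms
proof (induct p rule: vwalk_induct)
  case (Base u)
  then show ?case by (simp add: reachable_def)
next
  case (Cons u v es)
  then have "(v, last (v # es)) \<in> rtrancl_on X (arcs_ends (with_proj G \<restriction> X))"
    by (simp add: reachable_def)
  moreover have "(u, v) \<in> arcs_ends (with_proj G \<restriction> X)"
    using Cons by (simp add: arcs_ends_induce_proj)
  ultimately show ?case using Cons
    by (auto simp: reachable_def intro: converse_rtrancl_on_into_rtrancl_on)
qed

theorem lemma2p1: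
  fixes G :: "'a pair_pre_digraph" and \<sigma> :: "'a \<Rightarrow> nat set" and m :: nat
    and s t :: 'a and C :: "nat set"
  assumes "pair_graph G"
    and "kuratowski_planar (with_proj G)"
    and "\<forall>v\<in>pverts G. \<sigma> v \<subseteq> {1..m}"
    and "color_connected G \<sigma> m"
    and "s \<in> pverts G" and "t \<in> pverts G"
    and "s \<rightarrow>\<^sup>*\<^bsub>with_proj G\<^esub> t"
    and "C \<subseteq> {1..m}"
  shows "color_hitting_set G \<sigma> m s t C \<longleftrightarrow>
    (\<exists>p. vpath p (with_proj G) \<and> hd p = s \<and> last p = t \<and> colors_of_path \<sigma> p \<subseteq> C)"
proof
  assume H: "color_hitting_set G \<sigma> m s t C"
  define S where "S = {1..m} - C"
  have "C \<inter> S = {}" by (auto simp: S_def)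
  then have "\<not> color_separator G \<sigma> m s t S" using H by (auto simp: color_hitting_set_def)
  then have R: "s \<rightarrow>\<^sup>*\<^bsub>with_proj G \<restriction> (pverts G - verts_of_colors G \<sigma> S)\<^esub> t"
    by (auto simp: color_separator_def S_def)
  obtain p where p: "vwalk p (with_proj G)" "hd p = s" "last p = t"
    "set p \<subseteq> pverts G - verts_of_colors G \<sigma> S"
    using reach_induce_vwalk[OF _ R] by blast
  define q where "q = vwalk_to_vpath p"
  have q: "vpath q (with_proj G)" "hd q = s" "last q = t"
    using p by (auto simp: q_def vwalk_to_vpath_vpath vwalk_to_vpath_hd vwalk_to_vpath_last)
  have "set q \<subseteq> set p" using vwalk_to_vpath_subset by (auto simp: q_def)
  then have "colors_of_path \<sigma> q \<subseteq> C"
  proof (clarsimp simp: colors_of_path_def)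
    fix x v assume v: "v \<in> set q" and x: "x \<in> \<sigma> v"
    have "v \<in> set p" using v \<open>set q \<subseteq> set p\<close> by blast
    then have vG: "v \<in> pverts G" and vS: "\<sigma> v \<inter> S = {}"
      using p(4) by (auto simp: verts_of_colors_def)
    have "x \<in> {1..m}" using assms(3) vG x by blast
    then show "x \<in> C" using vS x by (auto simp: S_def)
  qed
  then show "\<exists>p. vpath p (with_proj G) \<and> hd p = s \<and> last p = t \<and> colors_of_path \<sigma> p \<subseteq> C"
    using q by blast
next
  assume "\<exists>p. vpath p (with_proj G) \<and> hd p = s \<and> last p = t \<and> colors_of_path \<sigma> p \<subseteq> C"
  then obtain p where p: "vpath p (with_proj G)" "hd p = s" "last p = t" "colors_of_path \<sigma> p \<subseteq> C"
    by blast
  show "color_hitting_set G \<sigma> m s t C"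
    unfolding color_hitting_set_def
  proof (intro allI impI)
    fix S assume sep: "color_separator G \<sigma> m s t S"
    show "C \<inter> S \<noteq> {}"
    proof
      assume CS: "C \<inter> S = {}"
      have w: "vwalk p (with_proj G)" using p(1) by auto
      have "set p \<subseteq> pverts G - verts_of_colors G \<sigma> S"
        using w p(4) CS by (auto simp: colors_of_path_def verts_of_colors_def vwalk_def)
      from vwalk_reach_induce[OF w this] p(2,3) sep show False
        by (simp add: color_separator_def)
    qed
  qed
qed

end
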